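(* Let $n\ge 2$, $R>0$, let $\sigma:[0,R]\to[0,\infty)$ be smooth with $\sigma(0)=0$, $\sigma'(0)=1$, $\sigma(r)>0$ on $(0,R]$, and suppose $K(r)=-\sigma''(r)/\sigma(r)\ge k$ on $(0,R]$ for some $k\in\mathbb{R}$ (with $R<\pi/\sqrt{k}$ if $k>0$). Let $g=dr^2+\sigma^2(r)\,du^2$ and $\mathrm{can}_k=dr^2+\sin_k^2(r)\,du^2$ on the ball $B_R\subset\mathbb{R}^n$ (polar coordinates $(r,u)$, $u\in\mathbb{S}^{n-1}$). Then for every $f\in C^1(\overline{B_R})$ not identically zero on $\partial B_R$, $$\frac{\int_{B_R}\|\nabla f\|_g^2\,dv_g}{\int_{\partial B_R}f^2\,ds_g}\ \ge\ \frac{\int_{B_R}\|\nabla f\|_{\mathrm{can}_k}^2\,dv_{\mathrm{can}_k}}{\int_{\partial B_R}f^2\,ds_{\mathrm{can}_k}}.$$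
   Context: $\sin_k r = r$ if $k=0$; $\sin_k r=\sin(\sqrt{k}\,r)/\sqrt{k}$ if $k>0$; $\sin_k r=\sinh(\sqrt{-k}\,r)/\sqrt{-k}$ if $k<0$. $du^2$ is the standard metric on $\mathbb{S}^{n-1}$; $dv$ and $ds$ denote the Riemannian volume measures on $B_R$ and on $\partial B_R=\{r=R\}$ for the indicated metric, and $\|\nabla f\|$ the norm of the gradient in that metric. *)

theory Defs
  imports "HOL-Analysis.Analysis"
begin

definition sin_k :: "real \<Rightarrow> real \<Rightarrow> real" where
  "sin_k k r = (if k = 0 then r
                else if k > 0 then sin (sqrt k * r) / sqrt k
                else sinh (sqrt (- k) * r) / sqrt (- k))"

text \<open>Integral over the unit sphere S^(n-1) in real^'n w.r.t. the standard
  (Riemannian = Hausdorff) surface measure du, via the cone formula: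
  the integral of h over S equals n times the Lebesgue integral over the
  unit ball of x mapsto h(x/|x|).\<close>
definition sphere_integral :: "(real ^ 'n \<Rightarrow> real) \<Rightarrow> real" where
  "sphere_integral h =
     real CARD('n) * (LINT x : ball 0 1 | lborel. h (x /\<^sub>R norm x))"

text \<open>Squared norm of the gradient of f, w.r.t. the warped metric
  dr^2 + s(r)^2 du^2, at a point x /= 0, where Gx is the Euclidean gradient of f
  at x.  Writing r = |x|, u = x/r, a = Gx . u (radial derivative), and
  t = |Gx|^2 - a^2 (squared tangential Euclidean gradient, equal to
  r^(-2) |grad_u f|^2 on the sphere), the g-norm squared is
  a^2 + s(r)^(-2) |grad_u f|^2 = a^2 + (r / s r)^2 t.\<close>
definition warped_grad_sq :: "(real \<Rightarrow> real) \<Rightarrow> real ^ 'n \<Rightarrow> real ^ 'n \<Rightarrow> real" where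
  "warped_grad_sq s x Gx =
     (let r = norm x; a = Gx \<bullet> (x /\<^sub>R r)
      in a\<^sup>2 + (r / s r)\<^sup>2 * ((norm Gx)\<^sup>2 - a\<^sup>2))"

text \<open>Dirichlet energy on B_R w.r.t. dr^2 + s(r)^2 du^2 (f with Euclidean gradient G):
  the volume form is s(r)^(n-1) dr du = (s(|x|)/|x|)^(n-1) dx.\<close>
definition warped_energy :: "(real \<Rightarrow> real) \<Rightarrow> real \<Rightarrow> (real ^ 'n \<Rightarrow> real ^ 'n) \<Rightarrow> real" where
  "warped_energy s R G =
     (LINT x : ball 0 R | lborel.
        warped_grad_sq s x (G x) * (s (norm x) / norm x) ^ (CARD('n) - 1))"

text \<open>Integral of f^2 over the boundary sphere r = R w.r.t. the induced measure
  ds = s(R)^(n-1) du.\<close>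
definition warped_boundary :: "(real \<Rightarrow> real) \<Rightarrow> real \<Rightarrow> (real ^ 'n \<Rightarrow> real) \<Rightarrow> real" where
  "warped_boundary s R f =
     s R ^ (CARD('n) - 1) * sphere_integral (\<lambda>u::real^'n. (f (R *\<^sub>R u))\<^sup>2)"

end

theory Submission
  imports Defs
begin

definition cos_k :: "real \<Rightarrow> real \<Rightarrow> real" where
  "cos_k k r = (if k = 0 then 1
                else if k > 0 then cos (sqrt k * r)
                else cosh (sqrt (- k) * r))"

lemma sin_k_deriv: "(sin_k k has_real_derivative cos_k k x) (at x)"
proof -
  consider "k = 0" | "k > 0" | "k < 0" by linarith
  then show ?thesis
  proof cases
    case 1 then show ?thesis unfolding sin_k_def cos_k_def
      by (auto intro!: derivative_eq_intros)
  next
    case 2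
    have "((\<lambda>r. sin (sqrt k * r) / sqrt k) has_real_derivative cos (sqrt k * x)) (at x)"
      using 2 by (auto intro!: derivative_eq_intros simp: mult.assoc)
    then show ?thesis using 2 unfolding sin_k_def[abs_def] cos_k_def by simp
  next
    case 3
    have e: "sqrt (-k) * sqrt (-k) = -k" using 3 by simp
    have "((\<lambda>r. sinh (sqrt (-k) * r) / sqrt (-k)) has_real_derivative cosh (sqrt (-k) * x)) (at x)"
      using 3 by (auto intro!: derivative_eq_intros simp: mult.assoc e)
    then show ?thesis using 3 unfolding sin_k_def[abs_def] cos_k_def by simp
  qed
qed

lemma cos_k_deriv: "(cos_k k has_real_derivative (- k * sin_k k x)) (at x)"
proof -
  consider "k = 0" | "k > 0" | "k < 0" by linarith
  then show ?thesis
  proof cases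
    case 1 then show ?thesis unfolding sin_k_def cos_k_def
      by (auto intro!: derivative_eq_intros)
  next
    case 2
    have "((\<lambda>r. cos (sqrt k * r)) has_real_derivative - k * (sin (sqrt k * x) / sqrt k)) (at x)"
      using 2 by (auto intro!: derivative_eq_intros simp: field_simps)
    then show ?thesis using 2 unfolding sin_k_def cos_k_def[abs_def] by simp
  next
    case 3
    have e: "sqrt (-k) * sqrt (-k) = -k" using 3 by simp
    have "((\<lambda>r. cosh (sqrt (-k) * r)) has_real_derivative - k * (sinh (sqrt (-k) * x) / sqrt (-k))) (at x)"
      using 3 by (auto intro!: derivative_eq_intros simp: field_simps mult.assoc[symmetric] e)
    then show ?thesis using 3 unfolding sin_k_def cos_k_def[abs_def] by simp
  qed
qed

lemma sin_k_0: "sin_k k 0 = 0" and cos_k_0: "cos_k k 0 = 1"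
  by (auto simp: sin_k_def cos_k_def)

lemma sin_k_pos: assumes "0 < r" "k > 0 \<Longrightarrow> r < pi / sqrt k" shows "sin_k k r > 0"
proof -
  consider "k = 0" | "k > 0" | "k < 0" by linarith
  then show ?thesis
  proof cases
    case 1 then show ?thesis using assms by (simp add: sin_k_def)
  next
    case 2
    have "sqrt k * r < pi" using assms(2)[OF 2] 2 by (simp add: field_simps)
    then have "sin (sqrt k * r) > 0" using 2 assms(1) by (intro sin_gt_zero) auto
    then show ?thesis using 2 by (simp add: sin_k_def)
  next
    case 3
    have "sinh (sqrt (-k) * r) > 0" using 3 assms(1) by simp
    then show ?thesis using 3 by (simp add: sin_k_def)
  qed
qed

lemma sturm:
  fixes \<sigma> :: "real \<Rightarrow> real" and D :: "nat \<Rightarrow> real \<Rightarrow> real" and R k :: real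
  assumes Rpos: "R > 0"
    and D0: "D 0 = \<sigma>"
    and smooth: "\<And>m x. x \<in> {0..R} \<Longrightarrow>
                   (D m has_real_derivative D (Suc m) x) (at x within {0..R})"
    and sig0: "\<sigma> 0 = 0"
    and sig'0: "D 1 0 = 1"
    and sigpos: "\<And>r. r \<in> {0<..R} \<Longrightarrow> \<sigma> r > 0"
    and curv: "\<And>r. r \<in> {0<..R} \<Longrightarrow> - D 2 r / \<sigma> r \<ge> k"
    and Rk: "k > 0 \<Longrightarrow> R < pi / sqrt k"
    and r: "r \<in> {0<..R}"
  shows "\<sigma> r \<le> sin_k k r \<and> \<sigma> R * sin_k k r \<le> \<sigma> r * sin_k k R"
proof -
  define s where "s = sin_k k"
  define c where "c = cos_k k"
  have spos: "s x > 0" if "x \<in> {0<..R}" for x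
    unfolding s_def using that Rk by (intro sin_k_pos) auto
  have ds: "(s has_real_derivative c x) (at x within S)" for x S
    unfolding s_def c_def by (rule has_field_derivative_at_within[OF sin_k_deriv])
  have dc: "(c has_real_derivative (- k * s x)) (at x within S)" for x S
    unfolding s_def c_def by (rule has_field_derivative_at_within[OF cos_k_deriv])
  have dsig: "(\<sigma> has_real_derivative D 1 x) (at x within {0..R})" if "x \<in> {0..R}" for x
    using smooth[of x 0] that D0 by simp
  have dD1: "(D 1 has_real_derivative D 2 x) (at x within {0..R})" if "x \<in> {0..R}" for x
    using smooth[of x 1] that by (simp add: numeral_2_eq_2)
  have sigcont: "continuous_on {0..R} \<sigma>"
    by (rule DERIV_continuous_on[OF dsig])
  have scont: "continuous_on S s" for S
    by (rule DERIV_continuous_on[OF ds])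
  define W where "W x = D 1 x * s x - \<sigma> x * c x" for x
  have dW: "(W has_real_derivative s x * (D 2 x + k * \<sigma> x)) (at x within {0..R})"
    if "x \<in> {0..R}" for x
  proof -
    have "((\<lambda>x. D 1 x * s x - \<sigma> x * c x) has_real_derivative
       (D 2 x * s x + c x * D 1 x - (D 1 x * c x + (- k * s x) * \<sigma> x))) (at x within {0..R})"
      by (rule DERIV_diff[OF DERIV_mult[OF dD1[OF that] ds] DERIV_mult[OF dsig[OF that] dc]])
    then show ?thesis unfolding W_def[abs_def] by (simp add: algebra_simps)
  qed
  have W0: "W 0 = 0" using sig0 by (simp add: W_def s_def sin_k_0)
  have Wle: "W x \<le> 0" if "x \<in> {0<..R}" for x
  proof -
    have "W x \<le> W 0"
    proof (rule DERIV_nonpos_imp_decreasing_open[of 0 x W])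
      show "0 \<le> x" using that by simp
      fix y assume y: "0 < y" "y < x"
      then have yi: "y \<in> interior {0..R}" using that by auto
      have sp: "0 < \<sigma> y" using sigpos[of y] y that by auto
      have "k \<le> (- D 2 y) / \<sigma> y" using curv[of y] y that by auto
      then have "k * \<sigma> y \<le> - D 2 y" by (simp only: pos_le_divide_eq[OF sp])
      then have "D 2 y \<le> - k * \<sigma> y" by simp
      then have "s y * (D 2 y + k * \<sigma> y) \<le> 0"
        using spos[of y] y that by (intro mult_nonneg_nonpos) auto
      moreover have "DERIV W y :> s y * (D 2 y + k * \<sigma> y)"
        using dW[of y] y that at_within_interior[OF yi] by auto
      ultimately show "\<exists>z. DERIV W y :> z \<and> z \<le> 0" by blast
    next
      show "continuous_on {0..x} W"
        by (rule continuous_on_subset[OF DERIV_continuous_on[OF dW]]) (use that in auto)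
    qed
    then show ?thesis using W0 by simp
  qed
  define \<rho> where "\<rho> x = \<sigma> x / s x" for x
  have rho_mono: "\<rho> b \<le> \<rho> a" if "0 < a" "a \<le> b" "b \<le> R" for a b
  proof (rule DERIV_nonpos_imp_decreasing_open[of a b \<rho>])
    show "a \<le> b" by fact
    fix y assume y: "a < y" "y < b"
    then have yi: "y \<in> interior {0..R}" using that by auto
    have "DERIV \<rho> y :> (D 1 y * s y - \<sigma> y * c y) / (s y * s y)"
      unfolding \<rho>_def[abs_def] using dsig[of y] ds[of y] spos[of y] y that at_within_interior[OF yi]
      by (intro DERIV_divide) auto
    moreover have "(D 1 y * s y - \<sigma> y * c y) / (s y * s y) \<le> 0"
      using Wle[of y] y that unfolding W_def by (intro divide_nonpos_nonneg) auto
    ultimately show "\<exists>z. DERIV \<rho> y :> z \<and> z \<le> 0" by blast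
  next
    show "continuous_on {a..b} \<rho>" unfolding \<rho>_def[abs_def]
      using that spos
      by (intro continuous_on_divide continuous_on_subset[OF sigcont] scont) (auto, metis order.strict_trans2 order.trans less_irrefl)
  qed
  have lim1: "((\<lambda>y. \<sigma> y / y) \<longlongrightarrow> 1) (at_right 0)"
    using dsig[of 0] Rpos sig0 sig'0 unfolding has_field_derivative_iff
    by (simp add: at_within_Icc_at_right)
  have lim2: "((\<lambda>y. s y / y) \<longlongrightarrow> 1) (at_right 0)"
    using ds[of 0 "{0<..}"] unfolding has_field_derivative_iff
    by (simp add: s_def c_def sin_k_0 cos_k_0)
  have lim: "(\<rho> \<longlongrightarrow> 1) (at_right 0)"
  proof -
    have "((\<lambda>y. (\<sigma> y / y) / (s y / y)) \<longlongrightarrow> 1 / 1) (at_right 0)"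
      by (intro tendsto_divide lim1 lim2) auto
    moreover have "eventually (\<lambda>y. (\<sigma> y / y) / (s y / y) = \<rho> y) (at_right 0)"
      by (rule eventually_mono[OF eventually_at_right_less]) (simp add: \<rho>_def)
    ultimately show ?thesis using tendsto_cong by fastforce
  qed
  have rho1: "\<rho> x \<le> 1" if "x \<in> {0<..R}" for x
  proof (rule tendsto_le[OF _ lim tendsto_const])
    show "at_right (0::real) \<noteq> bot" by simp
    show "eventually (\<lambda>y. \<rho> x \<le> \<rho> y) (at_right 0)"
      unfolding eventually_at_right_field using that
      by (intro exI[of _ x]) (auto intro!: rho_mono)
  qed
  have "\<sigma> r \<le> s r" using rho1[OF r] spos[OF r] by (simp add: \<rho>_def divide_le_eq)
  moreover have "\<rho> R \<le> \<rho> r" using r by (intro rho_mono) auto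
  then have "\<sigma> R * s r \<le> \<sigma> r * s R"
    using spos[OF r] spos[of R] Rpos by (simp add: \<rho>_def divide_le_eq le_divide_eq mult.commute)
  ultimately show ?thesis by (simp add: s_def)
qed

lemma phi_bounds:
  fixes \<sigma> :: "real \<Rightarrow> real" and d :: "real \<Rightarrow> real" and R :: real
  assumes Rpos: "R > 0"
    and dsig: "\<And>x. x \<in> {0..R} \<Longrightarrow> (\<sigma> has_real_derivative d x) (at x within {0..R})"
    and sig0: "\<sigma> 0 = 0"
    and sig'0: "d 0 = 1"
    and sigpos: "\<And>r. r \<in> {0<..R} \<Longrightarrow> \<sigma> r > 0"
  shows "\<exists>m M. 0 < m \<and> (\<forall>r\<in>{0<..R}. m \<le> \<sigma> r / r \<and> \<sigma> r / r \<le> M)"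
proof -
  define \<phi> where "\<phi> r = (if r = 0 then 1 else \<sigma> r / r)" for r
  have sigcont: "continuous_on {0..R} \<sigma>"
    by (rule DERIV_continuous_on[OF dsig])
  have cont: "continuous_on {0..R} \<phi>"
    unfolding continuous_on_eq_continuous_within
  proof
    fix x assume x: "x \<in> {0..R}"
    show "continuous (at x within {0..R}) \<phi>"
    proof (cases "x = 0")
      case True
      have "((\<lambda>y. (\<sigma> y - \<sigma> 0) / (y - 0)) \<longlongrightarrow> 1) (at 0 within {0..R})"
        using dsig[of 0] Rpos sig'0 unfolding has_field_derivative_iff by simp
      moreover have "eventually (\<lambda>y. (\<sigma> y - \<sigma> 0) / (y - 0) = \<phi> y) (at 0 within {0..R})"
        unfolding eventually_at_filter by (simp add: \<phi>_def sig0)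
      ultimately have "(\<phi> \<longlongrightarrow> 1) (at 0 within {0..R})" using tendsto_cong by fastforce
      then show ?thesis using True by (simp add: continuous_within \<phi>_def)
    next
      case False
      then have xp: "x > 0" using x by auto
      have "((\<lambda>y. \<sigma> y / y) \<longlongrightarrow> \<sigma> x / x) (at x within {0..R})"
        using sigcont x False unfolding continuous_on_eq_continuous_within continuous_within
        by (intro tendsto_divide tendsto_ident_at) auto
      moreover have "eventually (\<lambda>y. \<sigma> y / y = \<phi> y) (at x within {0..R})"
        unfolding eventually_at using xp
        by (intro exI[of _ x]) (auto simp: \<phi>_def dist_real_def)
      ultimately have "(\<phi> \<longlongrightarrow> \<sigma> x / x) (at x within {0..R})" using tendsto_cong by fastforce
      then show ?thesis using False by (simp add: continuous_within \<phi>_def)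
    qed
  qed
  obtain x1 where x1: "x1 \<in> {0..R}" "\<And>y. y \<in> {0..R} \<Longrightarrow> \<phi> x1 \<le> \<phi> y"
    using continuous_attains_inf[OF compact_Icc _ cont] Rpos by auto
  obtain x2 where x2: "x2 \<in> {0..R}" "\<And>y. y \<in> {0..R} \<Longrightarrow> \<phi> y \<le> \<phi> x2"
    using continuous_attains_sup[OF compact_Icc _ cont] Rpos by auto
  have "\<phi> x1 > 0" using x1(1) sigpos[of x1] by (auto simp: \<phi>_def)
  moreover have "\<forall>r\<in>{0<..R}. \<phi> x1 \<le> \<sigma> r / r \<and> \<sigma> r / r \<le> \<phi> x2"
  proof
    fix r :: real assume r: "r \<in> {0<..R}"
    then have "\<phi> r = \<sigma> r / r" "r \<in> {0..R}" by (auto simp: \<phi>_def)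
    then show "\<phi> x1 \<le> \<sigma> r / r \<and> \<sigma> r / r \<le> \<phi> x2" using x1(2)[of r] x2(2)[of r] by simp
  qed
  ultimately show ?thesis by blast
qed

lemma alg:
  fixes r a b c d A t :: real and N :: nat
  assumes r: "r > 0" and a: "0 < a" and b: "0 < b" and c: "0 < c" and d: "0 < d"
    and ab: "a \<le> b" and cd: "c \<le> d" and cross: "c * b \<le> a * d" and N: "1 \<le> N"
    and A: "A \<ge> 0" and t: "t \<ge> 0"
  shows "(A + (r / b)\<^sup>2 * t) * (b / r) ^ N / d ^ N \<le> (A + (r / a)\<^sup>2 * t) * (a / r) ^ N / c ^ N"
proof -
  define \<rho> where "\<rho> = a / b"
  define q where "q = c / d"
  have \<rho>: "0 < \<rho>" "\<rho> \<le> 1" using a b ab by (auto simp: \<rho>_def)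
  have q: "0 < q" "q \<le> 1" using c d cd by (auto simp: q_def)
  have qr: "q \<le> \<rho>" using cross b d by (simp add: q_def \<rho>_def divide_le_eq le_divide_eq mult.commute)
  have aeq: "a = \<rho> * b" and ceq: "c = q * d" using b d by (auto simp: \<rho>_def q_def)
  define X where "X = (b / (r * d)) ^ N"
  have X: "X \<ge> 0" using b r d by (simp add: X_def)
  have Xs: "(b / r) ^ N / d ^ N = X" by (simp add: X_def power_divide power_mult_distrib)
  have Xa: "(a / r) ^ N / c ^ N = (\<rho> / q) ^ N * X"
    by (simp add: X_def aeq ceq power_divide power_mult_distrib)
  have rq: "1 \<le> \<rho> / q" using qr q by simp
  have k1: "1 \<le> (\<rho> / q) ^ N" using rq by simp
  have "\<rho> / q \<le> (\<rho> / q) ^ N" using rq N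
    by (metis power_increasing power_one_right)
  moreover have "\<rho> \<le> \<rho> / q" using \<rho> q by (simp add: le_divide_eq mult_le_cancel_left1)
  moreover have "\<rho>\<^sup>2 \<le> \<rho>" using \<rho> by (simp add: power2_eq_square mult_le_cancel_left1)
  ultimately have k2: "\<rho>\<^sup>2 \<le> (\<rho> / q) ^ N" by linarith
  have lhs: "(A + (r / b)\<^sup>2 * t) * (b / r) ^ N / d ^ N = A * X + t * ((r / b)\<^sup>2 * X)"
    by (simp add: Xs[symmetric] algebra_simps add_divide_distrib)
  have rhs: "(A + (r / a)\<^sup>2 * t) * (a / r) ^ N / c ^ N
       = A * ((\<rho> / q) ^ N * X) + t * ((r / b)\<^sup>2 * X * ((\<rho> / q) ^ N / \<rho>\<^sup>2))"
  proof -
    have e1: "(A + (r / a)\<^sup>2 * t) * (a / r) ^ N / c ^ N = (A + (r / a)\<^sup>2 * t) * ((a / r) ^ N / c ^ N)"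
      by simp
    have e2: "(r / a)\<^sup>2 = (r / b)\<^sup>2 / \<rho>\<^sup>2" using \<rho> b by (simp add: aeq power_divide power_mult_distrib)
    show ?thesis by (simp only: e1 Xa, simp only: e2) (simp add: algebra_simps)
  qed
  have "A * X \<le> A * ((\<rho> / q) ^ N * X)"
    using A X k1 by (intro mult_left_mono) (auto intro: mult_le_cancel_right1[THEN iffD2])
  moreover have k3: "1 \<le> (\<rho> / q) ^ N / \<rho>\<^sup>2" using k2 \<rho> by (simp add: le_divide_eq)
  have Y: "0 \<le> (r / b)\<^sup>2 * X" using X by simp
  have "(r / b)\<^sup>2 * X * 1 \<le> (r / b)\<^sup>2 * X * ((\<rho> / q) ^ N / \<rho>\<^sup>2)"
    by (rule mult_left_mono[OF k3 Y])
  then have "(r / b)\<^sup>2 * X \<le> (r / b)\<^sup>2 * X * ((\<rho> / q) ^ N / \<rho>\<^sup>2)" by simp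
  then have "t * ((r / b)\<^sup>2 * X) \<le> t * ((r / b)\<^sup>2 * X * ((\<rho> / q) ^ N / \<rho>\<^sup>2))"
    using t by (intro mult_left_mono) auto
  ultimately show ?thesis unfolding lhs rhs by linarith
qed

lemma grad_facts:
  fixes x Gx :: "real ^ 'n"
  assumes "x \<noteq> 0"
  shows "(Gx \<bullet> (x /\<^sub>R norm x))\<^sup>2 \<le> (norm Gx)\<^sup>2"
proof -
  have "\<bar>Gx \<bullet> (x /\<^sub>R norm x)\<bar> \<le> norm Gx * norm (x /\<^sub>R norm x)" by (rule Cauchy_Schwarz_ineq2)
  also have "norm (x /\<^sub>R norm x) = 1" using assms by simp
  finally have "\<bar>Gx \<bullet> (x /\<^sub>R norm x)\<bar> \<le> norm Gx" by simp
  then have "\<bar>Gx \<bullet> (x /\<^sub>R norm x)\<bar>\<^sup>2 \<le> (norm Gx)\<^sup>2" by (intro power_mono) auto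
  then show ?thesis by simp
qed

lemma wgs_zero: "warped_grad_sq h (0::real^'n) v = 0"
  by (simp add: warped_grad_sq_def)

lemma meas_wf:
  fixes h :: "real \<Rightarrow> real" and G :: "real ^ 'n \<Rightarrow> real ^ 'n" and c R :: real and N :: nat
  assumes hc: "continuous_on {0<..<R} h" and hnz: "\<And>r. r \<in> {0<..<R} \<Longrightarrow> h r \<noteq> 0"
    and Gc: "continuous_on (cball 0 R) G" and cnz: "c \<noteq> 0"
  shows "(\<lambda>x. indicator (ball 0 R) x * (warped_grad_sq h x (G x) * (h (norm x) / norm x) ^ N / c))
           \<in> borel_measurable lborel"
proof -
  define g where "g x = warped_grad_sq h x (G x) * (h (norm x) / norm x) ^ N / c" for x :: "real ^ 'n"
  have g0: "g 0 = 0" by (simp add: g_def wgs_zero)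
  let ?S = "ball (0::real^'n) R - {0}"
  have Sb: "?S \<in> sets borel" by auto
  have nc: "continuous_on ?S (\<lambda>x. h (norm x))"
    by (rule continuous_on_compose2[OF hc continuous_on_norm_id]) auto
  have Gc': "continuous_on ?S G" by (rule continuous_on_subset[OF Gc]) auto
  have "continuous_on ?S g"
    unfolding g_def warped_grad_sq_def Let_def
    using hnz cnz
    by (intro continuous_intros nc Gc') auto
  then have "(\<lambda>x. indicator ?S x *\<^sub>R g x) \<in> borel_measurable borel"
    by (rule borel_measurable_continuous_on_indicator[OF Sb])
  moreover have "(\<lambda>x. indicator ?S x *\<^sub>R g x) = (\<lambda>x. indicator (ball 0 R) x * g x)"
    using g0 by (auto simp: indicator_def fun_eq_iff)
  ultimately show ?thesis by (simp add: g_def)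
qed

lemma bnd:
  fixes A t p q B P Q c :: real and N :: nat
  assumes "0 \<le> A" "A \<le> B" "0 \<le> t" "t \<le> B" "0 \<le> p" "p \<le> P" "0 \<le> q" "q \<le> Q" "c > 0"
  shows "(A + p\<^sup>2 * t) * q ^ N / c \<le> (B + P\<^sup>2 * B) * Q ^ N / c"
proof -
  have "p\<^sup>2 * t \<le> P\<^sup>2 * B" using assms by (intro mult_mono power_mono) auto
  then have "A + p\<^sup>2 * t \<le> B + P\<^sup>2 * B" using assms by linarith
  moreover have "q ^ N \<le> Q ^ N" using assms by (intro power_mono) auto
  ultimately have "(A + p\<^sup>2 * t) * q ^ N \<le> (B + P\<^sup>2 * B) * Q ^ N"
    using assms by (intro mult_mono) auto
  then show ?thesis using assms by (simp add: divide_right_mono)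
qed

theorem mainTheorem5:
  fixes \<sigma> :: "real \<Rightarrow> real" and D :: "nat \<Rightarrow> real \<Rightarrow> real"
    and R k :: real
    and f :: "real ^ 'n \<Rightarrow> real" and G :: "real ^ 'n \<Rightarrow> real ^ 'n"
  assumes n2: "CARD('n) \<ge> 2"
    and Rpos: "R > 0"
    and D0: "D 0 = \<sigma>"
    and smooth: "\<And>m x. x \<in> {0..R} \<Longrightarrow>
                   (D m has_real_derivative D (Suc m) x) (at x within {0..R})"
    and sig0: "\<sigma> 0 = 0"
    and sig'0: "D 1 0 = 1"
    and sigpos: "\<And>r. r \<in> {0<..R} \<Longrightarrow> \<sigma> r > 0"
    and curv: "\<And>r. r \<in> {0<..R} \<Longrightarrow> - D 2 r / \<sigma> r \<ge> k"
    and Rk: "k > 0 \<Longrightarrow> R < pi / sqrt k"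
    and f_C1: "\<And>x. x \<in> cball 0 R \<Longrightarrow>
                 (f has_derivative (\<lambda>h. G x \<bullet> h)) (at x within cball 0 R)"
    and G_cont: "continuous_on (cball 0 R) G"
    and f_bdry: "\<exists>x\<in>sphere 0 R. f x \<noteq> 0"
  shows "warped_energy \<sigma> R G / warped_boundary \<sigma> R f
           \<ge> warped_energy (sin_k k) R G / warped_boundary (sin_k k) R f"
proof -
  define N where "N = CARD('n) - 1"
  have N1: "1 \<le> N" using n2 by (simp add: N_def)
  define s where "s = sin_k k"
  have st: "\<sigma> r \<le> s r \<and> \<sigma> R * s r \<le> \<sigma> r * s R" if "r \<in> {0<..R}" for r
    unfolding s_def by (rule sturm[OF Rpos D0 smooth sig0 sig'0 sigpos curv Rk that])
  have spos: "s r > 0" if "r \<in> {0<..R}" for r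
    unfolding s_def using that Rk by (intro sin_k_pos) auto
  have sRp: "s R > 0" and sigRp: "\<sigma> R > 0" using spos sigpos Rpos by auto
  have dsig: "(\<sigma> has_real_derivative D 1 x) (at x within {0..R})" if "x \<in> {0..R}" for x
    using smooth[of x 0] that D0 by simp
  obtain m M where mM: "0 < m" "\<And>r. r \<in> {0<..R} \<Longrightarrow> m \<le> \<sigma> r / r \<and> \<sigma> r / r \<le> M"
    using phi_bounds[OF Rpos dsig sig0 sig'0 sigpos] by blast
  have Mpos: "M > 0" using mM(2)[of R] mM(1) Rpos by force
  obtain MG where MG: "\<And>x. x \<in> cball 0 R \<Longrightarrow> norm (G x) \<le> MG"
    using compact_imp_bounded[OF compact_continuous_image[OF G_cont compact_cball]]
    unfolding bounded_iff by blast
  have sigc: "continuous_on {0<..<R} \<sigma>"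
    by (rule continuous_on_subset[OF DERIV_continuous_on[OF dsig]]) auto
  have sc: "continuous_on {0<..<R} s"
    unfolding s_def
    by (rule DERIV_continuous_on[OF has_field_derivative_at_within[OF sin_k_deriv]])
  define wf where "wf h x = indicator (ball 0 R) x *
      (warped_grad_sq h x (G x) * (h (norm x) / norm x) ^ N / h R ^ N)" for h and x :: "real ^ 'n"
  have meas_sig: "wf \<sigma> \<in> borel_measurable lborel"
    unfolding wf_def[abs_def] using sigpos sigRp
    by (intro meas_wf[OF sigc _ G_cont]) (auto, metis less_eq_real_def less_irrefl)
  have meas_s: "wf s \<in> borel_measurable lborel"
    unfolding wf_def[abs_def] using spos sRp
    by (intro meas_wf[OF sc _ G_cont]) (auto, metis less_eq_real_def less_irrefl)
  have pw: "0 \<le> wf s x \<and> wf s x \<le> wf \<sigma> x \<and> wf \<sigma> x \<le> indicator (ball 0 R) x *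
     ((MG\<^sup>2 + (1 / m)\<^sup>2 * MG\<^sup>2) * M ^ N / \<sigma> R ^ N)" for x
  proof (cases "x \<in> ball 0 R \<and> x \<noteq> 0")
    case False
    then show ?thesis
      using Mpos sigRp by (cases "x \<in> ball 0 R") (auto simp: wf_def wgs_zero)
  next
    case True
    define r where "r = norm x"
    have r: "r \<in> {0<..R}" "0 < r" using True by (auto simp: r_def)
    define a where "a = G x \<bullet> (x /\<^sub>R r)"
    define t where "t = (norm (G x))\<^sup>2 - a\<^sup>2"
    have a2: "a\<^sup>2 \<le> (norm (G x))\<^sup>2" unfolding a_def r_def using True by (intro grad_facts) auto
    have G2: "(norm (G x))\<^sup>2 \<le> MG\<^sup>2" using MG[of x] True by (intro power_mono) auto
    have wgs: "warped_grad_sq h x (G x) = a\<^sup>2 + (r / h r)\<^sup>2 * t" for h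
      by (simp add: warped_grad_sq_def Let_def a_def t_def r_def)
    have wfe: "wf h x = (a\<^sup>2 + (r / h r)\<^sup>2 * t) * (h r / r) ^ N / h R ^ N" for h
      using True by (simp add: wf_def wgs r_def)
    have sr: "0 < s r" using spos r by auto
    have sgr: "0 < \<sigma> r" using sigpos r by auto
    have tge: "0 \<le> t" using a2 unfolding t_def by linarith
    have c1: "0 \<le> wf s x" unfolding wfe using sr sRp r a2
      by (intro divide_nonneg_pos mult_nonneg_nonneg add_nonneg_nonneg tge) auto
    have c2: "wf s x \<le> wf \<sigma> x" unfolding wfe
      using st[OF r(1)] st[of R] Rpos sr sgr sRp sigRp N1 tge r
      by (intro alg) auto
    have tle: "t \<le> MG\<^sup>2" using G2 zero_le_power2[of a] unfolding t_def by linarith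
    have mr: "m \<le> \<sigma> r / r" "\<sigma> r / r \<le> M" using mM(2)[OF r(1)] by auto
    have "r / \<sigma> r \<le> 1 / m" using mr mM(1) r sgr
      by (simp add: divide_le_eq le_divide_eq mult.commute)
    then have c3: "wf \<sigma> x \<le> (MG\<^sup>2 + (1 / m)\<^sup>2 * MG\<^sup>2) * M ^ N / \<sigma> R ^ N"
    proof -
      have "a\<^sup>2 \<le> MG\<^sup>2" using a2 G2 by linarith
      moreover have "0 \<le> r / \<sigma> r" "0 \<le> \<sigma> r / r" using r sgr by auto
      moreover have sRN: "\<sigma> R ^ N > 0" using sigRp by simp
      show ?thesis unfolding wfe
        by (rule bnd[OF zero_le_power2[of a] calculation(1) tge tle calculation(2) \<open>r / \<sigma> r \<le> 1 / m\<close>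
             calculation(3) mr(2) sRN])
    qed
    show ?thesis using c1 c2 c3 True by auto
  qed
  have int_sig: "integrable lborel (wf \<sigma>)"
  proof (rule Bochner_Integration.integrable_bound[OF _ meas_sig])
    show "integrable lborel (\<lambda>x. indicator (ball 0 R) x * ((MG\<^sup>2 + (1 / m)\<^sup>2 * MG\<^sup>2) * M ^ N / \<sigma> R ^ N))"
      by (intro integrable_mult_left integrable_real_indicator emeasure_lborel_ball_finite) auto
    show "AE x in lborel. norm (wf \<sigma> x) \<le> norm (indicator (ball 0 R) x * ((MG\<^sup>2 + (1 / m)\<^sup>2 * MG\<^sup>2) * M ^ N / \<sigma> R ^ N))"
    proof (rule AE_I2)
      fix x
      have "0 \<le> wf \<sigma> x" "wf \<sigma> x \<le> indicator (ball 0 R) x * ((MG\<^sup>2 + (1 / m)\<^sup>2 * MG\<^sup>2) * M ^ N / \<sigma> R ^ N)"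
        using pw[of x] by auto
      then show "norm (wf \<sigma> x) \<le> norm (indicator (ball 0 R) x * ((MG\<^sup>2 + (1 / m)\<^sup>2 * MG\<^sup>2) * M ^ N / \<sigma> R ^ N))"
        unfolding real_norm_def
        by (metis abs_ge_self abs_of_nonneg order_trans)
    qed
  qed
  have int_s: "integrable lborel (wf s)"
  proof (rule Bochner_Integration.integrable_bound[OF int_sig meas_s], rule AE_I2)
    fix x
    have "0 \<le> wf s x" "wf s x \<le> wf \<sigma> x" using pw[of x] by auto
    then show "norm (wf s x) \<le> norm (wf \<sigma> x)" by simp
  qed
  have mono: "integral\<^sup>L lborel (wf s) \<le> integral\<^sup>L lborel (wf \<sigma>)"
    by (rule integral_mono[OF int_s int_sig]) (use pw in blast)
  have Eeq: "warped_energy h R G / h R ^ N = integral\<^sup>L lborel (wf h)" for h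
  proof -
    have "integral\<^sup>L lborel (wf h) = integral\<^sup>L lborel (\<lambda>x. (indicator (ball 0 R) x *\<^sub>R
         (warped_grad_sq h x (G x) * (h (norm x) / norm x) ^ N)) / h R ^ N)"
      by (rule Bochner_Integration.integral_cong) (simp_all add: wf_def)
    also have "\<dots> = warped_energy h R G / h R ^ N"
      by (simp only: integral_divide_zero warped_energy_def set_lebesgue_integral_def N_def)
    finally show ?thesis by simp
  qed
  define S where "S = sphere_integral (\<lambda>u::real^'n. (f (R *\<^sub>R u))\<^sup>2)"
  have Beq: "warped_boundary h R f = h R ^ N * S" for h
    by (simp add: warped_boundary_def S_def N_def)
  have S0: "S \<ge> 0" unfolding S_def sphere_integral_def set_lebesgue_integral_def
    by (intro mult_nonneg_nonneg Bochner_Integration.integral_nonneg) auto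
  show ?thesis
  proof (cases "S = 0")
    case True then show ?thesis by (simp add: Beq s_def)
  next
    case False
    then have Sp: "S > 0" using S0 by simp
    have "warped_energy s R G / warped_boundary s R f = (warped_energy s R G / s R ^ N) / S"
      by (simp add: Beq)
    also have "\<dots> \<le> (warped_energy \<sigma> R G / \<sigma> R ^ N) / S"
      unfolding Eeq using mono Sp by (simp add: divide_right_mono)
    also have "\<dots> = warped_energy \<sigma> R G / warped_boundary \<sigma> R f"
      by (simp add: Beq)
    finally show ?thesis by (simp add: s_def)
  qed
qed

end
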